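(* For $k=1,2,3$ let $F_k(s)=C_k(sI-A_k)^{-1}B_k$ be strictly proper transfer functions with complex matrices $A_k,B_k,C_k$ of compatible dimensions and $A_k$ Hurwitz. Let $Q_{12}$ and $P_{23}$ be the unique solutions of the Sylvester equations $$A_1^*Q_{12}+Q_{12}A_2+C_1^*C_2=0,\qquad A_2P_{23}+P_{23}A_3^*+B_2B_3^*=0 .$$ Then $$\mathbf M(F_1,F_2,F_3):=\frac1{2\pi}\int_{\mathbb R}F_1(i\lambda)^*F_2(i\lambda)F_3(i\lambda)^*\,d\lambda=B_1^*Q_{12}P_{23}C_3^* .$$
   Context: $(\cdot)^*$ is the conjugate transpose; dimensions are such that the products $F_1^*F_2F_3^*$, $C_1^*C_2$, $B_2B_3^*$ are defined. *)

theory Defs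
  imports "HOL-Analysis.Analysis"
begin

definition ctrans :: "complex^'n^'m \<Rightarrow> complex^'m^'n" where
  "ctrans A = (\<chi> i j. cnj (A $ j $ i))"

definition is_eigenvalue :: "complex^'n^'n \<Rightarrow> complex \<Rightarrow> bool" where
  "is_eigenvalue A \<mu> \<longleftrightarrow> (\<exists>v. v \<noteq> 0 \<and> A *v v = \<mu> *s v)"

definition hurwitz :: "complex^'n^'n \<Rightarrow> bool" where
  "hurwitz A \<longleftrightarrow> (\<forall>\<mu>. is_eigenvalue A \<mu> \<longrightarrow> Re \<mu> < 0)"

definition tf :: "complex^'n^'n \<Rightarrow> complex^'m^'n \<Rightarrow> complex^'n^'p \<Rightarrow> complex \<Rightarrow> complex^'m^'p" where
  "tf A B C s = C ** matrix_inv (mat s - A) ** B"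

end

theory Submission
  imports Defs "HOL-Complex_Analysis.Cauchy_Integral_Formula"
begin


lemma halfdisc_bound:
  fixes f :: "complex \<Rightarrow> complex"
  assumes S: "open S" and RHP: "\<And>s. Re s \<ge> 0 \<Longrightarrow> s \<in> S" and hol: "f holomorphic_on S"
    and K: "K \<ge> 0"
    and dec: "\<And>s. Re s \<ge> 0 \<Longrightarrow> norm s \<ge> R \<Longrightarrow> norm (f s) \<le> K / (norm s)^2"
    and T: "T \<ge> R" "T > 0"
  shows "norm (integral {-T..T} (\<lambda>x. f (\<i> * of_real x))) \<le> K * pi / T"
proof -
  let ?c = "part_circlepath 0 T (-pi/2) (pi/2)"
  let ?l = "linepath (\<i> * of_real T) (- \<i> * of_real T)"
  let ?g = "?c +++ ?l"
  have e1: "exp (\<i> * of_real (pi/2)) = \<i>" by (metis cis_conv_exp cis_pi_half)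
  have e2: "exp (\<i> * of_real (-pi/2)) = -\<i>" by (metis cis_conv_exp cis_minus_pi_half minus_divide_left)
  have st: "pathstart ?c = - \<i> * of_real T" "pathfinish ?c = \<i> * of_real T"
    using e1 e2 by (simp_all add: mult.commute)
  have cimg: "path_image ?c \<subseteq> {s. Re s \<ge> 0}"
  proof
    fix w assume "w \<in> path_image ?c"
    then obtain x where x: "-pi/2 \<le> x" "x \<le> pi/2" "w = of_real T * exp (\<i> * of_real x)"
      by (auto simp: path_image_part_circlepath)
    have "cos x \<ge> 0" using x by (intro cos_ge_zero) auto
    then show "w \<in> {s. Re s \<ge> 0}" using x T by (simp flip: cis_conv_exp)
  qed
  have limg: "path_image ?l \<subseteq> {s. Re s \<ge> 0}"
    by (auto simp: closed_segment_def)
  have vp: "valid_path ?g" using st by (intro valid_path_join) auto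
  have loop: "pathfinish ?g = pathstart ?g" using st by simp
  have gimg: "path_image ?g \<subseteq> {s. Re s \<ge> 0}"
    using cimg limg st by (subst path_image_join) auto
  have conv: "convex {s. Re s \<ge> (0::real)}"
    by (auto simp: convex_def)
  have "(f has_contour_integral 0) ?g"
  proof (rule Cauchy_theorem_global[OF S hol vp loop])
    show "path_image ?g \<subseteq> S" using gimg RHP by auto
    fix w assume "w \<notin> S"
    then have "w \<notin> {s. Re s \<ge> 0}" using RHP by auto
    then show "winding_number ?g w = 0"
      using winding_number_zero_outside[OF valid_path_imp_path[OF vp] conv loop _ gimg] by blast
  qed
  have fc: "continuous_on {s. Re s \<ge> 0} f"
    by (rule continuous_on_subset[OF holomorphic_on_imp_continuous_on[OF hol]]) (use RHP in auto)
  have ic: "f contour_integrable_on ?c"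
    by (rule contour_integrable_continuous_part_circlepath) (use fc cimg continuous_on_subset in blast)
  have il: "f contour_integrable_on ?l"
    by (rule contour_integrable_continuous_linepath) (use fc limg continuous_on_subset in auto)
  obtain c1 where c1: "(f has_contour_integral c1) ?c" using ic by (auto simp: contour_integrable_on_def)
  obtain c2 where c2: "(f has_contour_integral c2) ?l" using il by (auto simp: contour_integrable_on_def)
  have "(f has_contour_integral (c1 + c2)) ?g"
    by (rule has_contour_integral_join[OF c1 c2]) auto
  then have sum0: "c1 + c2 = 0"
    using \<open>(f has_contour_integral 0) ?g\<close> has_contour_integral_unique by blast
  have bc: "norm c1 \<le> (K / T^2) * T * (pi/2 - (-pi/2))"
  proof (rule has_contour_integral_bound_part_circlepath[OF c1])
    fix x assume xi: "x \<in> path_image ?c"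
    have nx: "norm x = T" using in_path_image_part_circlepath[OF xi] T by simp
    show "norm (f x) \<le> K / T^2" using dec[of x] cimg xi nx T by auto
  qed (use K T in auto)
  have "(f has_contour_integral (-c2)) (linepath (- \<i> * of_real T) (\<i> * of_real T))"
    using has_contour_integral_reverse_linepath[OF c2] by simp
  then have "((\<lambda>x. f (Complex 0 x)) has_integral (-\<i> * (-c2))) {-T..T}"
    using T by (subst (asm) has_contour_integral_linepath_same_Re_iff[where c=0 and a="-T" and b=T]) auto
  moreover have "(\<lambda>x. f (Complex 0 x)) = (\<lambda>x. f (\<i> * of_real x))"
    by (rule ext, rule arg_cong[where f=f]) (simp add: complex_eq_iff)
  ultimately have "integral {-T..T} (\<lambda>x. f (\<i> * of_real x)) = \<i> * c2"
    by (simp add: integral_unique)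
  then have "norm (integral {-T..T} (\<lambda>x. f (\<i> * of_real x))) = norm c1"
    using sum0 by (simp add: norm_mult eq_neg_iff_add_eq_0[symmetric] )
  also have "\<dots> \<le> K * pi / T" using bc T by (simp add: power2_eq_square field_simps)
  finally show ?thesis .
qed



lemma arctan_integral: "((\<lambda>x::real. 1 / (1 + x^2)) has_integral pi) UNIV"
proof -
  define g where "g = (\<lambda>x::real. 1 / (1 + x^2))"
  define f where "f = (\<lambda>k::nat. \<lambda>x::real. if x \<in> {-real k..real k} then g x else 0)"
  have int: "integral UNIV (f k) = 2 * arctan (real k)" and fi: "f k integrable_on UNIV" for k
  proof -
    have "(g has_integral (arctan (real k) - arctan (- real k))) {-real k..real k}"
      unfolding g_def
      by (intro fundamental_theorem_of_calculus)
         (auto intro!: derivative_eq_intros simp: has_real_derivative_iff_has_vector_derivative[symmetric] divide_inverse)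
    then have h: "(g has_integral (2 * arctan (real k))) {-real k..real k}" by (simp add: arctan_minus)
    show "integral UNIV (f k) = 2 * arctan (real k)"
      unfolding f_def integral_restrict_UNIV using h by (rule integral_unique)
    show "f k integrable_on UNIV" unfolding f_def using h integrable_restrict_UNIV by blast
  qed
  have mono: "f k x \<le> f (Suc k) x" for k x
    by (auto simp: f_def g_def)
  have conv: "(\<lambda>k. f k x) \<longlonglongrightarrow> g x" for x
  proof (rule tendsto_eventually)
    obtain N::nat where "\<bar>x\<bar> \<le> real N" using real_arch_simple by blast
    then show "\<forall>\<^sub>F k in sequentially. f k x = g x"
      unfolding eventually_sequentially f_def by (intro exI[of _ N]) auto
  qed
  have bnd: "bounded (range (\<lambda>k. integral UNIV (f k)))"
  proof -
    have "norm (integral UNIV (f k)) \<le> pi" for k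
      using arctan_bounded[of "real k"] by (simp add: int)
    then show ?thesis by (auto simp: bounded_iff)
  qed
  have mc: "g integrable_on UNIV \<and> (\<lambda>k. integral UNIV (f k)) \<longlonglongrightarrow> integral UNIV g"
    by (rule monotone_convergence_increasing[OF fi mono conv bnd])
  have "(\<lambda>k. 2 * arctan (real k)) \<longlonglongrightarrow> 2 * (pi/2)"
    by (intro tendsto_intros filterlim_compose[OF tendsto_arctan_at_top filterlim_real_sequentially])
  then have "(\<lambda>k. integral UNIV (f k)) \<longlonglongrightarrow> pi" by (simp add: int)
  with mc have "integral UNIV g = pi" using LIMSEQ_unique by blast
  with mc show ?thesis unfolding g_def[symmetric] using has_integral_integrable_integral by blast
qed

lemma window:
  fixes h :: "real \<Rightarrow> complex"
  assumes hc: "continuous_on UNIV h"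
    and hb: "\<And>x. norm (h x) \<le> C / (1 + x^2)"
    and lim: "(\<lambda>n::nat. integral {-real n..real n} h) \<longlonglongrightarrow> L"
  shows "(h has_integral L) UNIV"
proof -
  define f where "f = (\<lambda>k::nat. \<lambda>x::real. if x \<in> {-real k..real k} then h x else 0)"
  have hi: "h integrable_on {-real k..real k}" for k
    by (rule integrable_continuous_interval) (use hc continuous_on_subset in blast)
  have fi: "f k integrable_on UNIV" for k unfolding f_def using hi integrable_restrict_UNIV by blast
  have fint: "integral UNIV (f k) = integral {-real k..real k} h" for k
    unfolding f_def by (rule integral_restrict_UNIV)
  have Hi: "(\<lambda>x. C / (1 + x^2)) integrable_on UNIV"
    using has_integral_mult_right[OF arctan_integral, of C] by (auto simp: integrable_on_def)
  have le: "norm (f k x) \<le> C / (1 + x^2)" for k x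
    using hb[of x] by (auto simp: f_def intro: order_trans[OF norm_ge_zero])
  have conv: "(\<lambda>k. f k x) \<longlonglongrightarrow> h x" for x
  proof (rule tendsto_eventually)
    obtain N::nat where "\<bar>x\<bar> \<le> real N" using real_arch_simple by blast
    then show "\<forall>\<^sub>F k in sequentially. f k x = h x"
      unfolding eventually_sequentially f_def by (intro exI[of _ N]) auto
  qed
  have dc: "h integrable_on UNIV" "(\<lambda>k. integral UNIV (f k)) \<longlonglongrightarrow> integral UNIV h"
    using dominated_convergence[OF fi Hi le conv] by auto
  then have "integral UNIV h = L" using lim fint LIMSEQ_unique by fastforce
  with dc show ?thesis using has_integral_integrable_integral by blast
qed

lemma decay_bound:
  fixes h :: "real \<Rightarrow> complex"
  assumes hc: "continuous_on UNIV h" and K: "K \<ge> 0"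
    and dec: "\<And>x. \<bar>x\<bar> \<ge> R \<Longrightarrow> norm (h x) \<le> K / x^2"
  shows "\<exists>C. \<forall>x. norm (h x) \<le> C / (1 + x^2)"
proof -
  define R' where "R' = max R 1"
  have "compact (h ` {-R'..R'})"
    by (rule compact_continuous_image) (use hc continuous_on_subset in auto)
  then obtain M where M: "\<And>x. x \<in> {-R'..R'} \<Longrightarrow> norm (h x) \<le> M"
    using compact_imp_bounded bounded_iff by (metis imageI)
  define C where "C = max (M * (1 + R'^2)) (2 * K)"
  have "norm (h x) \<le> C / (1 + x^2)" for x
  proof (cases "\<bar>x\<bar> \<le> R'")
    case True
    then have "x^2 \<le> R'^2" by (metis abs_ge_zero power2_abs power_mono)
    have M0: "M \<ge> 0" using M[of x] True norm_ge_zero[of "h x"] by (smt (verit) atLeastAtMost_iff)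
    have "norm (h x) \<le> M" using M True by (simp add: abs_le_iff)
    also have "M \<le> M * (1 + R'^2) / (1 + x^2)"
      using \<open>x^2 \<le> R'^2\<close> M0 by (simp add: field_simps add_pos_nonneg mult_left_mono)
    also have "\<dots> \<le> C / (1 + x^2)" by (intro divide_right_mono) (auto simp: C_def)
    finally show ?thesis .
  next
    case False
    then have x1: "\<bar>x\<bar> \<ge> R" "x^2 \<ge> 1" using R'_def
      by (auto, metis abs_ge_zero abs_one le_cases max.cobounded2 not_le one_le_power power2_abs order_trans)
    have "norm (h x) \<le> K / x^2" using dec x1 by auto
    also have "\<dots> \<le> 2 * K / (1 + x^2)"
    proof -
      have "K * 1 \<le> K * x^2" using x1 K by (intro mult_left_mono) auto
      then have "K * (1 + x^2) \<le> (2 * K) * x^2" by (simp add: algebra_simps)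
      then show ?thesis using x1 K by (simp add: frac_le_eq divide_le_eq le_divide_eq field_simps)
    qed
    also have "\<dots> \<le> C / (1 + x^2)" by (intro divide_right_mono) (auto simp: C_def)
    finally show ?thesis .
  qed
  then show ?thesis by blast
qed



lemma contour_zero:
  fixes f :: "complex \<Rightarrow> complex"
  assumes S: "open S" and RHP: "\<And>s. Re s \<ge> 0 \<Longrightarrow> s \<in> S" and hol: "f holomorphic_on S"
    and K: "K \<ge> 0"
    and dec: "\<And>s. Re s \<ge> 0 \<Longrightarrow> norm s \<ge> R \<Longrightarrow> norm (f s) \<le> K / (norm s)^2"
  shows "((\<lambda>x. f (\<i> * of_real x)) has_integral 0) UNIV"
    and "((\<lambda>x. f (- (\<i> * of_real x))) has_integral 0) UNIV"
proof -
  define h where "h = (\<lambda>x::real. f (\<i> * of_real x))"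
  have fc: "continuous_on S f" using hol holomorphic_on_imp_continuous_on by blast
  have hc: "continuous_on UNIV h"
    unfolding h_def
    by (rule continuous_on_compose2[OF fc]) (auto intro!: continuous_intros RHP)
  have hdec: "norm (h x) \<le> K / x^2" if "\<bar>x\<bar> \<ge> R" for x
    using dec[of "\<i> * of_real x"] that by (simp add: h_def norm_mult)
  obtain C where Cb: "\<And>x. norm (h x) \<le> C / (1 + x^2)"
    using decay_bound[OF hc K hdec] by blast
  have lim: "(\<lambda>n::nat. integral {-real n..real n} h) \<longlonglongrightarrow> 0"
  proof (rule Lim_null_comparison)
    show "\<forall>\<^sub>F n in sequentially. norm (integral {-real n..real n} h) \<le> K * pi * inverse (real n)"
    proof -
      obtain N::nat where N: "max R 1 \<le> real N" using real_arch_simple by blast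
      show ?thesis unfolding eventually_sequentially
      proof (intro exI[of _ N] allI impI)
        fix n assume "N \<le> n"
        then have "R \<le> real n" "0 < real n" using N by auto
        then show "norm (integral {-real n..real n} h) \<le> K * pi * inverse (real n)"
          using halfdisc_bound[OF S RHP hol K dec] unfolding h_def by (simp add: divide_inverse)
      qed
    qed
    show "(\<lambda>n. K * pi * inverse (real n)) \<longlonglongrightarrow> 0"
      by (rule tendsto_mult_right_zero[OF lim_inverse_n])
  qed
  show "((\<lambda>x. f (\<i> * of_real x)) has_integral 0) UNIV"
    using window[OF hc Cb lim] unfolding h_def .
  have hc': "continuous_on UNIV (\<lambda>x. h (-x))"
    by (rule continuous_on_compose2[OF hc]) (auto intro!: continuous_intros)
  have Cb': "\<And>x. norm (h (-x)) \<le> C / (1 + x^2)" using Cb by (metis power2_minus)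
  have lim': "(\<lambda>n::nat. integral {-real n..real n} (\<lambda>x. h (-x))) \<longlonglongrightarrow> 0"
  proof -
    have "integral {-real n..real n} (\<lambda>x. h (-x)) = integral {-real n..real n} h" for n
      using Henstock_Kurzweil_Integration.integral_reflect_real[of "real n" "- real n" h] by simp
    then show ?thesis using lim by simp
  qed
  show "((\<lambda>x. f (- (\<i> * of_real x))) has_integral 0) UNIV"
    using window[OF hc' Cb' lim'] unfolding h_def by simp
qed



lemma mrd: "((A::'a::semiring_1^'n^'m) + B) ** C = A ** C + B ** C"
  by (vector matrix_matrix_mult_def sum.distrib[symmetric] field_simps)
lemma msl: "(A::'a::ring_1^'n^'m) ** (B - C) = A ** B - A ** C"
  by (vector matrix_matrix_mult_def sum_subtractf[symmetric] field_simps)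
lemma msr: "((A::'a::ring_1^'n^'m) - B) ** C = A ** C - B ** C"
  by (vector matrix_matrix_mult_def sum_subtractf[symmetric] field_simps)
lemma mat_mult_left: "mat c ** (M::'a::semiring_1^'n^'m) = (\<chi> i j. c * M$i$j)"
  unfolding matrix_matrix_mult_def mat_def
  by (auto simp: vec_eq_iff if_distrib if_distribR sum.delta cong: if_cong)
lemma mat_mult_right: "(M::'a::semiring_1^'n^'m) ** mat c = (\<chi> i j. M$i$j * c)"
  unfolding matrix_matrix_mult_def mat_def
  by (auto simp: vec_eq_iff if_distrib if_distribR sum.delta' cong: if_cong)
lemma mat_comm: "mat c ** (M::'a::comm_semiring_1^'n^'m) = M ** mat c"
  by (simp add: mat_mult_left mat_mult_right mult.commute)
lemma mat_add: "mat a + mat b = (mat (a + b) :: 'a::semiring_1^'n^'n)"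
  by (vector mat_def)
lemma mat_diff: "mat a - mat b = (mat (a - b) :: 'a::ring_1^'n^'n)"
  by (vector mat_def)
lemma mat_mul: "mat a ** mat b = (mat (a * b) :: 'a::semiring_1^'n^'n)"
  by (simp add: mat_mult_left) (vector mat_def)
lemma mat_of_real: "mat (of_real r) ** (M::complex^'n^'m) = r *\<^sub>R M"
  by (simp add: mat_mult_left vec_eq_iff scaleR_conv_of_real[where 'a=complex])

lemma inv_props:
  assumes "invertible (M::'a::semiring_1^'n^'m)"
  shows "M ** matrix_inv M = mat 1" "matrix_inv M ** M = mat 1"
proof -
  have "\<exists>A'. M ** A' = mat 1 \<and> A' ** M = mat 1" using assms by (simp add: invertible_def)
  then have "M ** matrix_inv M = mat 1 \<and> matrix_inv M ** M = mat 1"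
    unfolding matrix_inv_def by (rule someI_ex)
  then show "M ** matrix_inv M = mat 1" "matrix_inv M ** M = mat 1" by auto
qed

lemma inv_unique:
  assumes "(A::'a::semiring_1^'n^'m) ** B = mat 1" "B ** A = mat 1"
  shows "matrix_inv A = B"
proof -
  have inv: "invertible A" using assms by (auto simp: invertible_def)
  have "matrix_inv A = matrix_inv A ** (A ** B)" using assms by simp
  also have "\<dots> = (matrix_inv A ** A) ** B" by (simp add: matrix_mul_assoc)
  also have "\<dots> = B" using inv_props[OF inv] by simp
  finally show ?thesis .
qed

lemma inv_mat: "(c::'a::field) \<noteq> 0 \<Longrightarrow> matrix_inv (mat c :: 'a^'n^'n) = mat (1/c)"
  by (rule inv_unique) (simp_all add: mat_mul)

lemma ctrans_mult: "ctrans ((A::complex^'n^'m) ** B) = ctrans B ** ctrans A"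
  by (simp add: ctrans_def matrix_matrix_mult_def vec_eq_iff mult.commute)
lemma ctrans_ctrans: "ctrans (ctrans A) = A"
  by (simp add: ctrans_def vec_eq_iff)
lemma ctrans_diff: "ctrans (A - B) = ctrans A - ctrans B"
  by (simp add: ctrans_def vec_eq_iff)
lemma ctrans_add: "ctrans (A + B) = ctrans A + ctrans B"
  by (simp add: ctrans_def vec_eq_iff)
lemma ctrans_mat: "ctrans (mat c :: complex^'n^'n) = mat (cnj c)"
  by (simp add: ctrans_def mat_def vec_eq_iff)

lemma ctrans_inv:
  assumes "invertible (M::complex^'n^'n)"
  shows "invertible (ctrans M)" "ctrans (matrix_inv M) = matrix_inv (ctrans M)"
proof -
  have a: "ctrans M ** ctrans (matrix_inv M) = mat 1"
    using inv_props(2)[OF assms] by (metis ctrans_mult ctrans_mat complex_cnj_one)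
  have b: "ctrans (matrix_inv M) ** ctrans M = mat 1"
    using inv_props(1)[OF assms] by (metis ctrans_mult ctrans_mat complex_cnj_one)
  show "invertible (ctrans M)" using a b by (auto simp: invertible_def)
  show "ctrans (matrix_inv M) = matrix_inv (ctrans M)" using inv_unique[OF a b] by simp
qed

lemma mat_vec: "mat c *v x = c *s (x::'a::semiring_1^'n)"
  by (simp add: vec_eq_iff matrix_vector_mult_def mat_def if_distrib if_distribR sum.delta sum.delta' cong: if_cong)

lemma hurwitz_inv:
  assumes "hurwitz (A::complex^'n^'n)" "Re s \<ge> 0"
  shows "invertible (mat s - A)"
proof -
  have "\<forall>x. (mat s - A) *v x = 0 \<longrightarrow> x = 0"
  proof (intro allI impI)
    fix x assume "(mat s - A) *v x = 0"
    then have "A *v x = s *s x"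
      by (simp add: matrix_vector_mult_diff_rdistrib mat_vec)
    then show "x = 0" using assms unfolding hurwitz_def is_eigenvalue_def by force
  qed
  then show ?thesis by (simp add: invertible_left_inverse matrix_left_invertible_ker)
qed

lemma hurwitz_inv_ctrans:
  assumes "hurwitz (A::complex^'n^'n)" "Re s \<ge> 0"
  shows "invertible (mat s - ctrans A)"
proof -
  have "invertible (mat (cnj s) - A)" using hurwitz_inv[OF assms(1)] assms(2) by simp
  then have "invertible (ctrans (mat (cnj s) - A))" by (rule ctrans_inv)
  then show ?thesis by (simp add: ctrans_diff ctrans_mat)
qed



lemma has_integral_vec:
  fixes f :: "'m::euclidean_space \<Rightarrow> 'a::euclidean_space^'n"
  assumes "\<And>i. ((\<lambda>x. f x $ i) has_integral (y $ i)) S"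
  shows "(f has_integral y) S"
proof (subst has_integral_componentwise_iff, intro ballI)
  fix b :: "'a^'n" assume "b \<in> Basis"
  then obtain i u where b: "b = axis i u" "u \<in> Basis" by (auto simp: Basis_vec_def)
  have "((\<lambda>x. f x $ i \<bullet> u) has_integral (y $ i \<bullet> u)) S"
    using assms[of i] b(2) by (subst (asm) has_integral_componentwise_iff) auto
  then show "((\<lambda>x. f x \<bullet> b) has_integral y \<bullet> b) S" by (simp add: b inner_axis)
qed

definition res :: "complex^'n^'n \<Rightarrow> complex \<Rightarrow> complex^'n^'n" where
  "res X s = matrix_inv (mat s - X)"

lemma det_holo:
  assumes "\<And>i j. (\<lambda>s. F s $ i $ j) holomorphic_on S"
  shows "(\<lambda>s. det (F s :: complex^'n^'n)) holomorphic_on S"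
  unfolding det_def by (intro holomorphic_intros assms)

lemma inv_entry:
  assumes "invertible (M::complex^'n^'n)"
  shows "matrix_inv M $ k $ j = det (\<chi> i l. if l = k then (if i = j then 1 else 0) else M$i$l) / det M"
proof -
  define x where "x = matrix_inv M *v axis j 1"
  have "M *v x = axis j 1"
    unfolding x_def by (simp add: matrix_vector_mul_assoc inv_props[OF assms])
  moreover have "det M \<noteq> 0" using assms invertible_det_nz by blast
  ultimately have "x = (\<chi> k. det(\<chi> i l. if l=k then axis j 1 $ i else M$i$l) / det M)"
    using cramer by blast
  moreover have "(\<chi> i l. if l = k then axis j 1 $ i else M$i$l) = (\<chi> i l. if l = k then (if i = j then 1 else 0) else M$i$l)"
    by (simp add: vec_eq_iff axis_def)
  ultimately have "x $ k = det (\<chi> i l. if l = k then (if i = j then 1 else 0) else M$i$l) / det M"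
    by simp
  moreover have "x $ k = matrix_inv M $ k $ j"
    by (simp add: x_def matrix_vector_mult_def axis_def if_distrib if_distribR sum.delta' cong: if_cong)
  ultimately show ?thesis by simp
qed

lemma res_holo:
  assumes "\<And>s. s \<in> S \<Longrightarrow> invertible (mat s - X)"
  shows "(\<lambda>s. res X s $ k $ j) holomorphic_on S"
proof -
  have "(\<lambda>s. det (\<chi> i l. if l = k then (if i = j then 1 else 0) else (mat s - X)$i$l) / det (mat s - X))
         holomorphic_on S"
  proof (intro holomorphic_intros det_holo)
    fix i l
    show "(\<lambda>s. (\<chi> i l. if l = k then (if i = j then 1 else 0) else (mat s - X)$i$l) $ i $ l) holomorphic_on S"
      by (cases "l = k"; cases "i = l") (auto simp: mat_def intro!: holomorphic_intros)
    show "(\<lambda>s. (mat s - X) $ i $ l) holomorphic_on S"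
      by (cases "i = l") (auto simp: mat_def intro!: holomorphic_intros)
  next
    fix s assume "s \<in> S"
    then show "det (mat s - X) \<noteq> 0" using assms invertible_det_nz by blast
  qed
  then show ?thesis
    by (rule holomorphic_transform) (use assms in \<open>simp add: res_def inv_entry\<close>)
qed

lemma holo_mult:
  assumes "\<And>i j. (\<lambda>s. A s $ i $ j) holomorphic_on S" "\<And>i j. (\<lambda>s. B s $ i $ j) holomorphic_on S"
  shows "(\<lambda>s. (A s ** (B s :: complex^'p^'n)) $ i $ j) holomorphic_on S"
  unfolding matrix_matrix_mult_def by (simp, intro holomorphic_intros assms)

definition mnorm :: "complex^'n^'m \<Rightarrow> real" where
  "mnorm M = (\<Sum>i\<in>UNIV. \<Sum>j\<in>UNIV. norm (M$i$j))"

lemma mnorm_nonneg: "mnorm M \<ge> 0"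
  unfolding mnorm_def by (intro sum_nonneg) auto

lemma mnorm_entry: "norm (M$i$j) \<le> mnorm M"
proof -
  have "norm (M$i$j) \<le> (\<Sum>j\<in>UNIV. norm (M$i$j))" by (rule member_le_sum) auto
  also have "\<dots> \<le> mnorm M" unfolding mnorm_def by (rule member_le_sum) (auto intro: sum_nonneg)
  finally show ?thesis .
qed

lemma mnorm_add: "mnorm (A + B) \<le> mnorm A + mnorm B"
  unfolding mnorm_def sum.distrib[symmetric] by (intro sum_mono) (simp add: norm_triangle_ineq)

lemma mnorm_mat1: "mnorm (mat 1 :: complex^'n^'n) = real CARD('n)"
  unfolding mnorm_def mat_def by (simp add: if_distrib if_distribR sum.delta cong: if_cong)

lemma mnorm_scal: "mnorm (\<chi> i j. M$i$j * c) = norm c * mnorm M"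
  unfolding mnorm_def by (simp add: norm_mult sum_distrib_left mult.commute)

lemma mnorm_mult: "mnorm ((A::complex^'k^'n) ** (B::complex^'m^'k)) \<le> mnorm A * mnorm B"
proof -
  have "mnorm (A ** B) \<le> (\<Sum>i\<in>UNIV. \<Sum>j\<in>UNIV. \<Sum>k\<in>UNIV. norm (A$i$k) * norm (B$k$j))"
    unfolding mnorm_def matrix_matrix_mult_def
    by (simp, intro sum_mono order_trans[OF norm_sum]) (simp add: norm_mult)
  also have "\<dots> = (\<Sum>i\<in>UNIV. \<Sum>k\<in>UNIV. norm (A$i$k) * (\<Sum>j\<in>UNIV. norm (B$k$j)))"
    by (simp add: sum_distrib_left sum.swap[of _ "UNIV::'m set"])
  also have "\<dots> \<le> (\<Sum>i\<in>UNIV. \<Sum>k\<in>UNIV. norm (A$i$k) * mnorm B)"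
  proof (intro sum_mono mult_left_mono)
    fix k show "(\<Sum>j\<in>UNIV. norm (B$k$j)) \<le> mnorm B"
      unfolding mnorm_def by (rule member_le_sum) (auto intro: sum_nonneg)
  qed auto
  also have "\<dots> = mnorm A * mnorm B"
    by (simp add: mnorm_def sum_distrib_right)
  finally show ?thesis .
qed

lemma res_decay:
  fixes X :: "complex^'n^'n"
  assumes inv: "invertible (mat s - X)" and s: "norm s \<ge> 2 * mnorm X" "s \<noteq> 0"
  shows "mnorm (res X s) \<le> 2 * real CARD('n) / norm s"
proof -
  let ?R = "res X s"
  have "?R ** (mat s - X) = mat 1" unfolding res_def using inv_props[OF inv] by simp
  then have "?R ** mat s = mat 1 + ?R ** X" by (simp add: msl algebra_simps)
  then have "norm s * mnorm ?R = mnorm (mat 1 + ?R ** X)"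
    by (metis mat_mult_right mnorm_scal)
  also have "\<dots> \<le> real CARD('n) + mnorm ?R * mnorm X"
    using mnorm_add[of "mat 1" "?R ** X"] mnorm_mult[of ?R X] by (simp add: mnorm_mat1)
  also have "\<dots> \<le> real CARD('n) + mnorm ?R * (norm s / 2)"
    using s mnorm_nonneg[of ?R] by (intro add_left_mono mult_left_mono) auto
  finally have "mnorm ?R * norm s \<le> 2 * real CARD('n)" by (simp add: algebra_simps)
  then show ?thesis using s by (simp add: field_simps)
qed



lemma matdiff_holo: "(\<lambda>s. (mat s - (X::complex^'n^'n)) $ i $ j) holomorphic_on S"
  by (cases "i = j") (auto simp: mat_def intro!: holomorphic_intros)

lemma L2:
  fixes X1 :: "complex^'a^'a" and X2 :: "complex^'b^'b"
    and M0 :: "complex^'a^'p" and M1 :: "complex^'b^'a" and M2 :: "complex^'q^'b"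
  assumes I1: "\<And>s. Re s \<ge> 0 \<Longrightarrow> invertible (mat s - X1)"
    and I2: "\<And>s. Re s \<ge> 0 \<Longrightarrow> invertible (mat s - X2)"
  shows "((\<lambda>x. M0 ** res X1 (\<i> * of_real x) ** M1 ** res X2 (\<i> * of_real x) ** M2) has_integral 0) UNIV"
    and "((\<lambda>x. M0 ** res X1 (- (\<i> * of_real x)) ** M1 ** res X2 (- (\<i> * of_real x)) ** M2) has_integral 0) UNIV"
proof -
  define F where "F = (\<lambda>s. M0 ** res X1 s ** M1 ** res X2 s ** M2)"
  define S where "S = {s. det (mat s - X1) \<noteq> 0} \<inter> {s. det (mat s - X2) \<noteq> 0}"
  have dh1: "(\<lambda>s. det (mat s - X1)) holomorphic_on UNIV"
    by (intro det_holo matdiff_holo)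
  have dh2: "(\<lambda>s. det (mat s - X2)) holomorphic_on UNIV"
    by (intro det_holo matdiff_holo)
  have S: "open S" unfolding S_def
    by (intro open_Int open_Collect_neq[OF holomorphic_on_imp_continuous_on[OF dh1] continuous_on_const]
        open_Collect_neq[OF holomorphic_on_imp_continuous_on[OF dh2] continuous_on_const])
  have RHP: "s \<in> S" if "Re s \<ge> 0" for s
    using I1[OF that] I2[OF that] unfolding S_def by (simp add: invertible_det_nz)
  have invS1: "invertible (mat s - X1)" and invS2: "invertible (mat s - X2)" if "s \<in> S" for s
    using that unfolding S_def by (simp_all add: invertible_det_nz)
  define n1 where "n1 = real CARD('a)"
  define n2 where "n2 = real CARD('b)"
  define R0 where "R0 = max (2 * mnorm X1) (2 * mnorm X2) + 1"
  define K where "K = mnorm M0 * (2 * n1) * mnorm M1 * (2 * n2) * mnorm M2"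
  have K: "K \<ge> 0" unfolding K_def n1_def n2_def by (intro mult_nonneg_nonneg mnorm_nonneg) auto
  have *: "((\<lambda>x. F (\<i> * of_real x) $ i $ j) has_integral 0) UNIV \<and>
           ((\<lambda>x. F (- (\<i> * of_real x)) $ i $ j) has_integral 0) UNIV" for i j
  proof -
    have c: "(\<lambda>s. (M::complex^'u^'v) $ i $ j) holomorphic_on S" for M i j by simp
    have r1: "(\<lambda>s. res X1 s $ i $ j) holomorphic_on S" for i j by (rule res_holo) (rule invS1)
    have r2: "(\<lambda>s. res X2 s $ i $ j) holomorphic_on S" for i j by (rule res_holo) (rule invS2)
    have hol: "(\<lambda>s. F s $ i $ j) holomorphic_on S"
      unfolding F_def
      by (rule holo_mult[OF holo_mult[OF holo_mult[OF holo_mult[OF c r1] c] r2] c])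
    have dec: "norm (F s $ i $ j) \<le> K / (norm s)^2" if s: "Re s \<ge> 0" "norm s \<ge> R0" for s
    proof -
      have s0: "s \<noteq> 0" "norm s > 0" using s R0_def mnorm_nonneg[of X1] by auto
      have r1: "mnorm (res X1 s) \<le> 2 * n1 / norm s"
        unfolding n1_def by (rule res_decay[OF I1[OF s(1)]]) (use s R0_def s0 in auto)
      have r2: "mnorm (res X2 s) \<le> 2 * n2 / norm s"
        unfolding n2_def by (rule res_decay[OF I2[OF s(1)]]) (use s R0_def s0 in auto)
      have "norm (F s $ i $ j) \<le> mnorm (F s)" by (rule mnorm_entry)
      also have "\<dots> \<le> mnorm M0 * mnorm (res X1 s) * mnorm M1 * mnorm (res X2 s) * mnorm M2"
      proof -
        have "mnorm (F s) \<le> mnorm (M0 ** res X1 s ** M1 ** res X2 s) * mnorm M2"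
          unfolding F_def by (rule mnorm_mult)
        also have "\<dots> \<le> (mnorm (M0 ** res X1 s ** M1) * mnorm (res X2 s)) * mnorm M2"
          by (intro mult_right_mono mnorm_mult mnorm_nonneg)
        also have "\<dots> \<le> ((mnorm (M0 ** res X1 s) * mnorm M1) * mnorm (res X2 s)) * mnorm M2"
          by (intro mult_right_mono mnorm_mult mnorm_nonneg)
        also have "\<dots> \<le> (((mnorm M0 * mnorm (res X1 s)) * mnorm M1) * mnorm (res X2 s)) * mnorm M2"
          by (intro mult_right_mono mnorm_mult mnorm_nonneg)
        finally show ?thesis .
      qed
      also have "\<dots> \<le> mnorm M0 * (2 * n1 / norm s) * mnorm M1 * (2 * n2 / norm s) * mnorm M2"
      proof -
        have a: "mnorm M0 * mnorm (res X1 s) \<le> mnorm M0 * (2 * n1 / norm s)"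
          by (rule mult_left_mono[OF r1 mnorm_nonneg])
        have b: "mnorm M0 * mnorm (res X1 s) * mnorm M1 \<le> mnorm M0 * (2 * n1 / norm s) * mnorm M1"
          by (rule mult_right_mono[OF a mnorm_nonneg])
        have c: "mnorm M0 * mnorm (res X1 s) * mnorm M1 * mnorm (res X2 s) \<le> mnorm M0 * (2 * n1 / norm s) * mnorm M1 * (2 * n2 / norm s)"
          by (rule mult_mono[OF b r2]) (use s0 in \<open>auto intro!: mult_nonneg_nonneg divide_nonneg_nonneg mnorm_nonneg simp: n1_def\<close>)
        show ?thesis by (rule mult_right_mono[OF c mnorm_nonneg])
      qed
      also have "\<dots> = K / (norm s)^2"
        unfolding K_def by (simp add: power2_eq_square field_simps)
      finally show ?thesis .
    qed
    show ?thesis using contour_zero[OF S RHP hol K dec] by auto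
  qed
  have v1: "((\<lambda>x. F (\<i> * of_real x)) has_integral 0) UNIV"
  proof (rule has_integral_vec)
    fix i show "((\<lambda>x. F (\<i> * of_real x) $ i) has_integral 0 $ i) UNIV"
      by (rule has_integral_vec) (use * in simp)
  qed
  have v2: "((\<lambda>x. F (- (\<i> * of_real x))) has_integral 0) UNIV"
  proof (rule has_integral_vec)
    fix i show "((\<lambda>x. F (- (\<i> * of_real x)) $ i) has_integral 0 $ i) UNIV"
      by (rule has_integral_vec) (use * in simp)
  qed
  show "((\<lambda>x. M0 ** res X1 (\<i> * of_real x) ** M1 ** res X2 (\<i> * of_real x) ** M2) has_integral 0) UNIV"
    using v1 unfolding F_def .
  show "((\<lambda>x. M0 ** res X1 (- (\<i> * of_real x)) ** M1 ** res X2 (- (\<i> * of_real x)) ** M2) has_integral 0) UNIV"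
    using v2 unfolding F_def .
qed



lemma core:
  fixes S1 E1 :: "complex^'a^'a" and R2 E2 :: "complex^'b^'b" and S3 E3 :: "complex^'c^'c"
    and Q :: "complex^'b^'a" and P :: "complex^'c^'b" and CC :: "complex^'b^'a" and BB :: "complex^'c^'b"
  assumes i1: "S1 ** E1 = mat 1" "E1 ** S1 = mat 1"
    and i2: "R2 ** E2 = mat 1" "E2 ** R2 = mat 1"
    and i3: "S3 ** E3 = mat 1" "E3 ** S3 = mat 1"
    and h1: "CC = E1 ** Q + Q ** E2" and h2: "BB = E2 ** P + P ** E3"
  shows "S1 ** CC ** R2 ** BB ** S3 = Q ** P ** S3 + Q ** R2 ** P + S1 ** Q ** BB ** S3"
proof -
  have a: "S1 ** CC ** R2 = Q ** R2 + S1 ** Q"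
  proof -
    have "S1 ** CC ** R2 = (S1 ** E1) ** Q ** R2 + S1 ** Q ** (E2 ** R2)"
      by (simp add: h1 matrix_add_ldistrib mrd matrix_mul_assoc)
    then show ?thesis using i1 i2 by simp
  qed
  have b: "R2 ** BB ** S3 = P ** S3 + R2 ** P"
  proof -
    have "R2 ** BB ** S3 = (R2 ** E2) ** P ** S3 + R2 ** P ** (E3 ** S3)"
      by (simp add: h2 matrix_add_ldistrib mrd matrix_mul_assoc)
    then show ?thesis using i2 i3 by simp
  qed
  have "S1 ** CC ** R2 ** BB ** S3 = Q ** (R2 ** BB ** S3) + S1 ** Q ** BB ** S3"
    by (simp add: a mrd matrix_mul_assoc)
  then show ?thesis
    by (simp add: b matrix_add_ldistrib matrix_mul_assoc)
qed


lemma resdec: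
  fixes R E Y :: "complex^'a^'a"
  assumes "R ** E = mat 1" "E + Y = mat c" "c \<noteq> 0"
  shows "R = mat (1/c) + R ** Y ** mat (1/c)"
proof -
  have "R ** mat c = R ** (E + Y)" using assms(2) by simp
  also have "\<dots> = mat 1 + R ** Y" using assms(1) by (simp add: matrix_add_ldistrib)
  finally have 1: "R ** mat c = mat 1 + R ** Y" .
  have "R = R ** (mat c ** mat (1/c))" using assms(3) by (simp add: mat_mul)
  also have "\<dots> = (R ** mat c) ** mat(1/c)" by (rule matrix_mul_assoc)
  also have "\<dots> = mat(1/c) + R ** Y ** mat(1/c)" by (simp only: 1 mrd matrix_mul_lid)
  finally show ?thesis .
qed

lemma inv_matc: "(c::complex) \<noteq> 0 \<Longrightarrow> invertible (mat c :: complex^'n^'n)"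
  unfolding invertible_def by (intro exI[of _ "mat (1/c)"]) (simp add: mat_mul)

lemma mat_neg1: "mat s - (- mat 1 :: complex^'n^'n) = mat (s + 1)"
  by (simp only: diff_minus_eq_add minus_minus mat_add)

lemma res_neg1: "s \<noteq> -1 \<Longrightarrow> res (- mat 1 :: complex^'n^'n) s = mat (1 / (s + 1))"
proof -
  assume "s \<noteq> -1"
  then have "s + 1 \<noteq> 0" using eq_neg_iff_add_eq_0[of s 1] by simp
  then show ?thesis unfolding res_def mat_neg1 by (rule inv_mat)
qed

lemma inv_neg1: "Re s \<ge> 0 \<Longrightarrow> invertible (mat s - (- mat 1 :: complex^'n^'n))"
proof -
  assume "Re s \<ge> 0"
  then have "Re (s + 1) > 0" by simp
  then have "s + 1 \<noteq> 0"
  proof (intro notI)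
    assume "s + 1 = 0" "Re (s + 1) > 0"
    then show False by simp
  qed
  then show ?thesis unfolding mat_neg1 by (rule inv_matc)
qed




lemma mat_comm_assoc: "Z ** mat c ** (M::complex^'n^'m) = Z ** M ** mat c"
  by (simp add: matrix_mul_assoc[symmetric] mat_comm)

lemma ctrans_tf:
  assumes "invertible (mat s - A)"
  shows "ctrans (tf A B C s) = ctrans B ** matrix_inv (mat (cnj s) - ctrans A) ** ctrans C"
  unfolding tf_def
  by (simp add: ctrans_mult ctrans_inv(2)[OF assms] ctrans_diff ctrans_mat matrix_mul_assoc)

lemma scal_id:
  fixes x :: real
  shows "1 / (- (\<i> * of_real x) + 1) + 1 / (\<i> * of_real x + 1) = complex_of_real (2 / (1 + x^2))"
proof -
  define s where "s = \<i> * complex_of_real x"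
  have p: "(1 - s) * (1 + s) = of_real (1 + x^2)"
    by (simp add: s_def algebra_simps power2_eq_square)
  have n1: "1 - s \<noteq> 0" and n2: "1 + s \<noteq> 0"
    by (auto simp: s_def complex_eq_iff)
  have "1 / (- s + 1) + 1 / (s + 1) = ((1 + s) + (1 - s)) / ((1 - s) * (1 + s))"
    using n1 n2 by (simp add: field_simps)
  also have "\<dots> = 2 / of_real (1 + x^2)" by (simp add: p)
  finally show ?thesis by (simp add: s_def)
qed



lemma pointwise:
  fixes A1 :: "complex^'n1^'n1" and B1 :: "complex^'m1^'n1" and C1 :: "complex^'n1^'p"
    and A2 :: "complex^'n2^'n2" and B2 :: "complex^'m^'n2" and C2 :: "complex^'n2^'p"
    and A3 :: "complex^'n3^'n3" and B3 :: "complex^'m^'n3" and C3 :: "complex^'n3^'p3"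
    and Q :: "complex^'n2^'n1" and P :: "complex^'n3^'n2"
  assumes h1: "hurwitz A1" and h2: "hurwitz A2" and h3: "hurwitz A3"
    and syl1: "ctrans A1 ** Q + Q ** A2 + ctrans C1 ** C2 = 0"
    and syl2: "A2 ** P + P ** ctrans A3 + B2 ** ctrans B3 = 0"
  shows "ctrans (tf A1 B1 C1 (\<i> * of_real x)) ** tf A2 B2 C2 (\<i> * of_real x)
               ** ctrans (tf A3 B3 C3 (\<i> * of_real x)) =
         (2 / (1 + x^2)) *\<^sub>R (ctrans B1 ** Q ** P ** ctrans C3)
       + (ctrans B1 ** Q) ** res A2 (\<i> * of_real x) ** ((A2 + mat 1) ** P)
                         ** res (- mat 1) (\<i> * of_real x) ** ctrans C3
       + (ctrans B1 ** Q ** P) ** res (ctrans A3) (- (\<i> * of_real x))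
                         ** (ctrans A3 + mat 1) ** res (- mat 1) (- (\<i> * of_real x)) ** ctrans C3
       + ctrans B1 ** res (ctrans A1) (- (\<i> * of_real x)) ** (Q ** B2 ** ctrans B3)
                         ** res (ctrans A3) (- (\<i> * of_real x)) ** ctrans C3"
proof -
  define s where "s = \<i> * complex_of_real x"
  have Res: "Re s = 0" "Re (-s) = 0" "cnj s = -s" by (simp_all add: s_def)
  define E1 where "E1 = mat (-s) - ctrans A1"
  define E2 where "E2 = mat s - A2"
  define E3 where "E3 = mat (-s) - ctrans A3"
  define S1 where "S1 = res (ctrans A1) (-s)"
  define R2 where "R2 = res A2 s"
  define S3 where "S3 = res (ctrans A3) (-s)"
  define CC where "CC = ctrans C1 ** C2"
  define BB where "BB = B2 ** ctrans B3"
  define Y2 where "Y2 = A2 + mat 1"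
  define Y3 where "Y3 = ctrans A3 + mat 1"
  define D2 where "D2 = (mat (1 / (s + 1)) :: complex^'n2^'n2)"
  define D2' where "D2' = (mat (1 / (s + 1)) :: complex^'n3^'n3)"
  define D3 where "D3 = (mat (1 / (- s + 1)) :: complex^'n3^'n3)"
  have inv1: "invertible E1" unfolding E1_def using hurwitz_inv_ctrans[OF h1] Res by simp
  have inv2: "invertible E2" unfolding E2_def using hurwitz_inv[OF h2] Res by simp
  have inv3: "invertible E3" unfolding E3_def using hurwitz_inv_ctrans[OF h3] Res by simp
  have S1i: "S1 ** E1 = mat 1" "E1 ** S1 = mat 1"
    unfolding S1_def res_def E1_def[symmetric] using inv_props[OF inv1] by auto
  have R2i: "R2 ** E2 = mat 1" "E2 ** R2 = mat 1"
    unfolding R2_def res_def E2_def[symmetric] using inv_props[OF inv2] by auto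
  have S3i: "S3 ** E3 = mat 1" "E3 ** S3 = mat 1"
    unfolding S3_def res_def E3_def[symmetric] using inv_props[OF inv3] by auto
  have t1: "ctrans (tf A1 B1 C1 s) = ctrans B1 ** S1 ** ctrans C1"
    using ctrans_tf[OF hurwitz_inv[OF h1, of s], of B1 C1] Res unfolding S1_def res_def by simp
  have t3: "ctrans (tf A3 B3 C3 s) = ctrans B3 ** S3 ** ctrans C3"
    using ctrans_tf[OF hurwitz_inv[OF h3, of s], of B3 C3] Res unfolding S3_def res_def by simp
  have t2: "tf A2 B2 C2 s = C2 ** R2 ** B2" unfolding tf_def R2_def res_def ..
  have hs1: "CC = E1 ** Q + Q ** E2"
  proof -
    have a: "E1 ** Q + Q ** E2 = (mat (-s) ** Q + Q ** mat s) - (ctrans A1 ** Q + Q ** A2)"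
      unfolding E1_def E2_def by (simp add: msr msl algebra_simps)
    have b: "mat (-s) ** Q + Q ** mat s = 0"
      by (simp add: mat_comm[of "-s" Q] matrix_add_ldistrib[symmetric] mat_add)
    have c: "CC = - (ctrans A1 ** Q + Q ** A2)"
      unfolding CC_def using syl1 by (metis add.commute eq_neg_iff_add_eq_0)
    show ?thesis using a b c by simp
  qed
  have hs2: "BB = E2 ** P + P ** E3"
  proof -
    have a: "E2 ** P + P ** E3 = (mat s ** P + P ** mat (-s)) - (A2 ** P + P ** ctrans A3)"
      unfolding E3_def E2_def by (simp add: msr msl algebra_simps)
    have b: "mat s ** P + P ** mat (-s) = 0"
      by (simp add: mat_comm[of "s" P] matrix_add_ldistrib[symmetric] mat_add)
    have c: "BB = - (A2 ** P + P ** ctrans A3)"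
      unfolding BB_def using syl2 by (metis add.commute eq_neg_iff_add_eq_0)
    show ?thesis using a b c by simp
  qed
  have core': "S1 ** CC ** R2 ** BB ** S3 = Q ** P ** S3 + Q ** R2 ** P + S1 ** Q ** BB ** S3"
    by (rule core[OF S1i R2i S3i hs1 hs2])
  have sp1: "s + 1 \<noteq> 0" using Res by (auto simp: complex_eq_iff)
  have sm1: "- s + 1 \<noteq> 0" using Res by (auto simp: complex_eq_iff)
  have d2: "R2 = D2 + R2 ** Y2 ** D2"
    unfolding D2_def
  proof (rule resdec[OF R2i(1)])
    show "E2 + Y2 = mat (s + 1)" unfolding E2_def Y2_def by (simp add: mat_add[symmetric] algebra_simps)
  qed (rule sp1)
  have d3: "S3 = D3 + S3 ** Y3 ** D3"
    unfolding D3_def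
  proof (rule resdec[OF S3i(1)])
    have "E3 + Y3 = mat (- s) + mat 1" unfolding E3_def Y3_def by (simp add: algebra_simps)
    then show "E3 + Y3 = mat (- s + 1)" by (simp only: mat_add)
  qed (rule sm1)
  have e1: "Q ** R2 ** P = Q ** P ** D2' + Q ** R2 ** (Y2 ** P) ** D2'"
  proof -
    have "Q ** R2 ** P = Q ** (D2 + R2 ** Y2 ** D2) ** P"
      using d2 by (rule arg_cong[where f="\<lambda>Z. Q ** Z ** P"])
    also have "\<dots> = Q ** D2 ** P + Q ** R2 ** Y2 ** D2 ** P"
      by (simp add: matrix_add_ldistrib mrd matrix_mul_assoc)
    also have "\<dots> = Q ** P ** D2' + Q ** R2 ** (Y2 ** P) ** D2'"
      unfolding D2_def D2'_def by (simp add: mat_comm_assoc matrix_mul_assoc)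
    finally show ?thesis .
  qed
  have e2: "Q ** P ** S3 = Q ** P ** D3 + Q ** P ** S3 ** Y3 ** D3"
  proof -
    have "Q ** P ** S3 = Q ** P ** (D3 + S3 ** Y3 ** D3)"
      using d3 by (rule arg_cong[where f="\<lambda>Z. Q ** P ** Z"])
    also have "\<dots> = Q ** P ** D3 + Q ** P ** S3 ** Y3 ** D3"
      by (simp add: matrix_add_ldistrib matrix_mul_assoc)
    finally show ?thesis .
  qed
  have dsum: "D3 + D2' = mat (of_real (2 / (1 + x^2)))"
  proof -
    have "1 / (- s + 1) + 1 / (s + 1) = complex_of_real (2 / (1 + x^2))"
      using scal_id[of x] unfolding s_def .
    then show ?thesis unfolding D3_def D2'_def by (simp only: mat_add)
  qed
  have LHS: "ctrans (tf A1 B1 C1 s) ** tf A2 B2 C2 s ** ctrans (tf A3 B3 C3 s)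
        = ctrans B1 ** (S1 ** CC ** R2 ** BB ** S3) ** ctrans C3"
    unfolding t1 t2 t3 CC_def BB_def by (simp add: matrix_mul_assoc)
  have mid: "S1 ** CC ** R2 ** BB ** S3 = Q ** P ** mat (of_real (2 / (1 + x^2)))
        + Q ** R2 ** (Y2 ** P) ** D2' + Q ** P ** S3 ** Y3 ** D3 + S1 ** Q ** BB ** S3"
  proof -
    have "S1 ** CC ** R2 ** BB ** S3 = (Q ** P ** D3 + Q ** P ** S3 ** Y3 ** D3)
          + (Q ** P ** D2' + Q ** R2 ** (Y2 ** P) ** D2') + S1 ** Q ** BB ** S3"
      unfolding core' e1[symmetric] e2[symmetric] ..
    also have "\<dots> = Q ** P ** (D3 + D2') + Q ** R2 ** (Y2 ** P) ** D2' + Q ** P ** S3 ** Y3 ** D3 + S1 ** Q ** BB ** S3"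
      by (simp add: matrix_add_ldistrib algebra_simps)
    finally show ?thesis unfolding dsum .
  qed
  have RHS: "(2 / (1 + x^2)) *\<^sub>R (ctrans B1 ** Q ** P ** ctrans C3)
       + (ctrans B1 ** Q) ** res A2 s ** ((A2 + mat 1) ** P) ** res (- mat 1) s ** ctrans C3
       + (ctrans B1 ** Q ** P) ** res (ctrans A3) (- s) ** (ctrans A3 + mat 1) ** res (- mat 1) (- s) ** ctrans C3
       + ctrans B1 ** res (ctrans A1) (- s) ** (Q ** B2 ** ctrans B3) ** res (ctrans A3) (- s) ** ctrans C3
     = ctrans B1 ** (Q ** P ** mat (of_real (2 / (1 + x^2)))
        + Q ** R2 ** (Y2 ** P) ** D2' + Q ** P ** S3 ** Y3 ** D3 + S1 ** Q ** BB ** S3) ** ctrans C3"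
  proof -
    have r1: "res (- mat 1) s = D2'" unfolding D2'_def
      by (rule res_neg1) (use sp1 in \<open>simp add: eq_neg_iff_add_eq_0\<close>)
    have r2: "res (- mat 1) (- s) = D3" unfolding D3_def
      by (rule res_neg1) (use sm1 in \<open>simp add: eq_neg_iff_add_eq_0\<close>)
    have z: "(2 / (1 + x^2)) *\<^sub>R (ctrans B1 ** Q ** P ** ctrans C3)
         = ctrans B1 ** (Q ** P ** mat (of_real (2 / (1 + x^2)))) ** ctrans C3"
    proof -
      let ?r = "2 / (1 + x^2)"
      have "ctrans B1 ** (Q ** P ** mat (of_real ?r)) ** ctrans C3
          = ctrans B1 ** (Q ** P) ** (mat (of_real ?r) ** ctrans C3)" by (simp only: matrix_mul_assoc)
      also have "\<dots> = ctrans B1 ** (Q ** P) ** (?r *\<^sub>R ctrans C3)" by (simp only: mat_of_real)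
      also have "\<dots> = ?r *\<^sub>R (ctrans B1 ** Q ** P ** ctrans C3)"
        by (simp add: matrix_scalar_ac scalar_matrix_assoc matrix_mul_assoc)
      finally show ?thesis ..
    qed
    show ?thesis
      unfolding z r1 r2 R2_def[symmetric] S3_def[symmetric] S1_def[symmetric] Y2_def[symmetric]
        Y3_def[symmetric] BB_def
      by (simp add: matrix_add_ldistrib mrd matrix_mul_assoc)
  qed
  show ?thesis unfolding s_def[symmetric] LHS mid RHS ..
qed



theorem lemmaB1:
  fixes A1 :: "complex^'n1^'n1" and B1 :: "complex^'m1^'n1" and C1 :: "complex^'n1^'p"
    and A2 :: "complex^'n2^'n2" and B2 :: "complex^'m^'n2" and C2 :: "complex^'n2^'p"
    and A3 :: "complex^'n3^'n3" and B3 :: "complex^'m^'n3" and C3 :: "complex^'n3^'p3"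
    and Q12 :: "complex^'n2^'n1" and P23 :: "complex^'n3^'n2"
  assumes "hurwitz A1" and "hurwitz A2" and "hurwitz A3"
    and "ctrans A1 ** Q12 + Q12 ** A2 + ctrans C1 ** C2 = 0"
    and "A2 ** P23 + P23 ** ctrans A3 + B2 ** ctrans B3 = 0"
  shows "((\<lambda>x::real. (1 / (2 * pi)) *\<^sub>R
            (ctrans (tf A1 B1 C1 (\<i> * of_real x)) ** tf A2 B2 C2 (\<i> * of_real x)
               ** ctrans (tf A3 B3 C3 (\<i> * of_real x))))
          has_integral (ctrans B1 ** Q12 ** P23 ** ctrans C3)) UNIV"
proof -
  note h1 = assms(1) and h2 = assms(2) and h3 = assms(3) and syl1 = assms(4) and syl2 = assms(5)
  define N where "N = ctrans B1 ** Q12 ** P23 ** ctrans C3"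
  define gL where "gL = (\<lambda>x::real. (ctrans B1 ** Q12) ** res A2 (\<i> * of_real x) ** ((A2 + mat 1) ** P23)
                         ** res (- mat 1) (\<i> * of_real x) ** ctrans C3)"
  define k1 where "k1 = (\<lambda>x::real. (ctrans B1 ** Q12 ** P23) ** res (ctrans A3) (- (\<i> * of_real x))
                         ** (ctrans A3 + mat 1) ** res (- mat 1) (- (\<i> * of_real x)) ** ctrans C3)"
  define k2 where "k2 = (\<lambda>x::real. ctrans B1 ** res (ctrans A1) (- (\<i> * of_real x)) ** (Q12 ** B2 ** ctrans B3)
                         ** res (ctrans A3) (- (\<i> * of_real x)) ** ctrans C3)"
  have igL: "(gL has_integral 0) UNIV" unfolding gL_def
    by (rule L2(1)[OF hurwitz_inv[OF h2] inv_neg1])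
  have ik1: "(k1 has_integral 0) UNIV" unfolding k1_def
    by (rule L2(2)[OF hurwitz_inv_ctrans[OF h3] inv_neg1])
  have ik2: "(k2 has_integral 0) UNIV" unfolding k2_def
    by (rule L2(2)[OF hurwitz_inv_ctrans[OF h1] hurwitz_inv_ctrans[OF h3]])
  have i0: "((\<lambda>x. (2 / (1 + x^2)) *\<^sub>R N) has_integral ((2 * pi) *\<^sub>R N)) UNIV"
  proof -
    have "((\<lambda>x::real. 2 * (1 / (1 + x^2))) has_integral (2 * pi)) UNIV"
      by (rule has_integral_mult_right[OF arctan_integral])
    then show ?thesis by (intro has_integral_scaleR_left) simp
  qed
  have pw: "ctrans (tf A1 B1 C1 (\<i> * of_real x)) ** tf A2 B2 C2 (\<i> * of_real x)
               ** ctrans (tf A3 B3 C3 (\<i> * of_real x)) = (2 / (1 + x^2)) *\<^sub>R N + gL x + k1 x + k2 x" for x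
    unfolding gL_def k1_def k2_def N_def by (rule pointwise[OF h1 h2 h3 syl1 syl2])
  have "((\<lambda>x. (2 / (1 + x^2)) *\<^sub>R N + gL x + k1 x + k2 x) has_integral ((2 * pi) *\<^sub>R N + 0 + 0 + 0)) UNIV"
    by (intro has_integral_add i0 igL ik1 ik2)
  then have "((\<lambda>x. (1 / (2 * pi)) *\<^sub>R ((2 / (1 + x^2)) *\<^sub>R N + gL x + k1 x + k2 x))
              has_integral ((1 / (2 * pi)) *\<^sub>R ((2 * pi) *\<^sub>R N + 0 + 0 + 0))) UNIV"
    by (rule has_integral_cmul)
  then show ?thesis by (simp add: pw N_def)
qed

end
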